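(* Let $X$ be a real $n\times p$ matrix ($p<n$) of full column rank with rows $x_1^\top,\dots,x_n^\top$, let $N=\{1,\dots,n\}$, let $M\subset N$, and let $y,b^*\in\mathbb{R}^n$ and $g^*,g\in\mathbb{R}^p$ be arbitrary. Then: (i) if $|M|=k<m(X)$, then $$\|y-Xg-b^*\|_1-\|y-Xg^*-b^*\|_1\geq (2c_k-1)\|X(g-g^* )\|_1-2\sum_{i\in N\setminus M}|y_i-x_i^\top g^*-b^*_i|;$$ (ii) if $|M|=0$, then for every $b\in\mathbb{R}^n$, $$\|y-Xg-b\|_1-\|y-Xg^*-b^*\|_1\geq \|X(g-g^* )+b-b^*\|_1-2\sum_{i\in N}|y_i-b^*_i-x_i^\top g^*|.$$
   Context: For $k\in\{1,\dots,n\}$, the leverage constants of $X$ are $$c_k=c_k(X)=\min_{M\subset N,\ |M|=k}\ \min_{g\in\mathbb{R}^p,\ g\neq 0}\ \frac{\sum_{i\in N\setminus M}|x_i^\top g|}{\sum_{i\in N}|x_i^\top g|},$$ and $m(X)=\max\{k\in N : c_k(X)>1/2\}$. *)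

theory Defs
  imports "HOL-Analysis.Analysis"
begin

text \<open>Rows of X are X $ i (i :: 'n), so x_i^T g = (X $ i) \<bullet> g.
  The index set N = {1..n} is the finite type 'n (UNIV), n = CARD('n), p = CARD('p).\<close>

definition l1norm :: "real^'n \<Rightarrow> real" where
  "l1norm v = (\<Sum>i\<in>UNIV. \<bar>v $ i\<bar>)"

text \<open>Leverage constant c_k(X): outer minimum over the (finite) family of subsets M with |M| = k,
  inner minimum (attained; written as infimum) over nonzero g.\<close>
definition lev_const :: "real^'p^'n \<Rightarrow> nat \<Rightarrow> real" where
  "lev_const X k =
     Min ((\<lambda>M. Inf ((\<lambda>g. (\<Sum>i\<in>UNIV - M. \<bar>(X $ i) \<bullet> g\<bar>) / (\<Sum>i\<in>UNIV. \<bar>(X $ i) \<bullet> g\<bar>))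
                   ` {g. g \<noteq> 0}))
          ` {M. card M = k})"

text \<open>m(X) = max{k in {1..n} : c_k(X) > 1/2}; convention 0 if this set is empty.\<close>
definition m_lev :: "real^'p^'n \<Rightarrow> nat" where
  "m_lev X = (let S = {k \<in> {1..CARD('n)}. lev_const X k > 1/2} in if S = {} then 0 else Max S)"

end

theory Submission
  imports Defs
begin

lemma lev_bound:
  fixes X :: "real^'p^'n" and M :: "'n set" and h :: "real^'p"
  shows "lev_const X (card M) * (\<Sum>i\<in>UNIV. \<bar>(X $ i) \<bullet> h\<bar>) \<le> (\<Sum>i\<in>UNIV - M. \<bar>(X $ i) \<bullet> h\<bar>)"
proof (cases "(\<Sum>i\<in>UNIV. \<bar>(X $ i) \<bullet> h\<bar>) = 0")
  case True
  then show ?thesis by (simp add: sum_nonneg)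
next
  case False
  define S where "S = (\<Sum>i\<in>UNIV. \<bar>(X $ i) \<bullet> h\<bar>)"
  have Spos: "S > 0" using False unfolding S_def by (metis abs_ge_zero order_less_le sum_nonneg)
  have h0: "h \<noteq> 0"
  proof
    assume "h = 0"
    then show False using False by simp
  qed
  let ?f = "\<lambda>M. Inf ((\<lambda>g. (\<Sum>i\<in>UNIV - M. \<bar>(X $ i) \<bullet> g\<bar>) / (\<Sum>i\<in>UNIV. \<bar>(X $ i) \<bullet> g\<bar>)) ` {g. g \<noteq> 0})"
  have fin: "finite {M' :: 'n set. card M' = card M}" by simp
  have "lev_const X (card M) \<le> ?f M"
    unfolding lev_const_def by (rule Min_le) (use fin in auto)
  also have "?f M \<le> (\<Sum>i\<in>UNIV - M. \<bar>(X $ i) \<bullet> h\<bar>) / S"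
    unfolding S_def
    by (rule cInf_lower) (use h0 in \<open>auto intro!: bdd_belowI[where m=0] divide_nonneg_nonneg sum_nonneg\<close>)
  finally have "lev_const X (card M) * S \<le> (\<Sum>i\<in>UNIV - M. \<bar>(X $ i) \<bullet> h\<bar>) / S * S"
    using Spos by (intro mult_right_mono) auto
  then show ?thesis using Spos unfolding S_def by simp
qed

theorem lemma3p3:
  fixes X :: "real^'p^'n" and M :: "'n set"
    and y bstar :: "real^'n" and gstar g :: "real^'p"
  assumes "CARD('p) < CARD('n)"
    and "rank X = CARD('p)"
  shows "(card M < m_lev X \<longrightarrow>
           l1norm (y - X *v g - bstar) - l1norm (y - X *v gstar - bstar)
             \<ge> (2 * lev_const X (card M) - 1) * l1norm (X *v (g - gstar))
               - 2 * (\<Sum>i\<in>UNIV - M. \<bar>y $ i - (X $ i) \<bullet> gstar - bstar $ i\<bar>))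
       \<and> (card M = 0 \<longrightarrow>
           (\<forall>b :: real^'n.
              l1norm (y - X *v g - b) - l1norm (y - X *v gstar - bstar)
                \<ge> l1norm (X *v (g - gstar) + b - bstar)
                  - 2 * (\<Sum>i\<in>UNIV. \<bar>y $ i - bstar $ i - (X $ i) \<bullet> gstar\<bar>)))"
proof (intro conjI impI allI)
  define r where "r i = y $ i - (X $ i) \<bullet> gstar - bstar $ i" for i
  define v where "v i = (X $ i) \<bullet> (g - gstar)" for i
  have vi: "(X $ i) \<bullet> g = v i + (X $ i) \<bullet> gstar" for i
    unfolding v_def by (simp add: inner_diff_right)
  have A: "l1norm (y - X *v g - bstar) = (\<Sum>i\<in>UNIV. \<bar>r i - v i\<bar>)"
    unfolding l1norm_def by (rule sum.cong) (auto simp: matrix_vector_mul_component r_def vi)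
  have B: "l1norm (y - X *v gstar - bstar) = (\<Sum>i\<in>UNIV. \<bar>r i\<bar>)"
    unfolding l1norm_def by (rule sum.cong) (auto simp: matrix_vector_mul_component r_def)
  have C: "l1norm (X *v (g - gstar)) = (\<Sum>i\<in>UNIV. \<bar>v i\<bar>)"
    unfolding l1norm_def by (simp add: matrix_vector_mul_component v_def)
  {
    assume "card M < m_lev X"
    let ?c = "lev_const X (card M)"
    have lb: "?c * (\<Sum>i\<in>UNIV. \<bar>v i\<bar>) \<le> (\<Sum>i\<in>UNIV - M. \<bar>v i\<bar>)"
      using lev_bound[of X M "g - gstar"] unfolding v_def .
    have split: "(\<Sum>i\<in>UNIV. F i) = (\<Sum>i\<in>UNIV - M. F i) + (\<Sum>i\<in>M. F i)" for F :: "'n \<Rightarrow> real"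
      by (rule sum.subset_diff) auto
    have s1: "(\<Sum>i\<in>UNIV - M. \<bar>r i - v i\<bar> - \<bar>r i\<bar>) \<ge> (\<Sum>i\<in>UNIV - M. \<bar>v i\<bar> - 2 * \<bar>r i\<bar>)"
      by (rule sum_mono) auto
    have s2: "(\<Sum>i\<in>M. \<bar>r i - v i\<bar> - \<bar>r i\<bar>) \<ge> (\<Sum>i\<in>M. - \<bar>v i\<bar>)"
      by (rule sum_mono) auto
    have "(\<Sum>i\<in>UNIV. \<bar>r i - v i\<bar>) - (\<Sum>i\<in>UNIV. \<bar>r i\<bar>)
        = (\<Sum>i\<in>UNIV - M. \<bar>r i - v i\<bar> - \<bar>r i\<bar>) + (\<Sum>i\<in>M. \<bar>r i - v i\<bar> - \<bar>r i\<bar>)"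
      by (subst split, subst split[of "\<lambda>i. \<bar>r i\<bar>"]) (simp add: sum_subtractf)
    also have "\<dots> \<ge> (\<Sum>i\<in>UNIV - M. \<bar>v i\<bar> - 2 * \<bar>r i\<bar>) + (\<Sum>i\<in>M. - \<bar>v i\<bar>)"
      using s1 s2 by linarith
    finally have D: "(\<Sum>i\<in>UNIV. \<bar>r i - v i\<bar>) - (\<Sum>i\<in>UNIV. \<bar>r i\<bar>) \<ge>
        2 * (\<Sum>i\<in>UNIV - M. \<bar>v i\<bar>) - (\<Sum>i\<in>UNIV. \<bar>v i\<bar>) - 2 * (\<Sum>i\<in>UNIV - M. \<bar>r i\<bar>)"
      using split[of "\<lambda>i. \<bar>v i\<bar>"] by (simp add: sum_subtractf sum_negf flip: sum_distrib_left)
    show "l1norm (y - X *v g - bstar) - l1norm (y - X *v gstar - bstar)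
             \<ge> (2 * ?c - 1) * l1norm (X *v (g - gstar))
               - 2 * (\<Sum>i\<in>UNIV - M. \<bar>y $ i - (X $ i) \<bullet> gstar - bstar $ i\<bar>)"
      unfolding A B C r_def[symmetric] using D lb by (simp add: algebra_simps)
  }
  fix b :: "real^'n"
  define d where "d i = v i + b $ i - bstar $ i" for i
  have A2: "l1norm (y - X *v g - b) = (\<Sum>i\<in>UNIV. \<bar>r i - d i\<bar>)"
    unfolding l1norm_def by (rule sum.cong) (auto simp: matrix_vector_mul_component r_def d_def vi)
  have C2: "l1norm (X *v (g - gstar) + b - bstar) = (\<Sum>i\<in>UNIV. \<bar>d i\<bar>)"
    unfolding l1norm_def by (simp add: matrix_vector_mul_component v_def d_def)
  have E: "(\<Sum>i\<in>UNIV. \<bar>y $ i - bstar $ i - (X $ i) \<bullet> gstar\<bar>) = (\<Sum>i\<in>UNIV. \<bar>r i\<bar>)"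
    unfolding r_def by (simp add: algebra_simps)
  have "(\<Sum>i\<in>UNIV. \<bar>r i - d i\<bar> - \<bar>r i\<bar>) \<ge> (\<Sum>i\<in>UNIV. \<bar>d i\<bar> - 2 * \<bar>r i\<bar>)"
    by (rule sum_mono) auto
  then show "l1norm (y - X *v g - b) - l1norm (y - X *v gstar - bstar)
                \<ge> l1norm (X *v (g - gstar) + b - bstar)
                  - 2 * (\<Sum>i\<in>UNIV. \<bar>y $ i - bstar $ i - (X $ i) \<bullet> gstar\<bar>)"
    unfolding A2 B C2 E by (simp add: sum_subtractf sum_distrib_left)
qed

end
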